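(* Let $M$ be a nest with standard labelling. Then: (i) if $C$ is a non-spanning circuit of $M$, then $|C|\in\{4,6\}$; (ii) if $C$ is a circuit of $M$ with $|C|=4$, then $C$ is one of the $15$ circuits listed in condition (1) of the definition of a nest; (iii) if $\{e_i,e_j,e_k',e_\ell'\}$ is a circuit of $M$, then $\{e_i,e_j\}\cup(\{e_1',\dots,e_6'\}-\{e_k',e_\ell'\})$ and $(\{e_1,\dots,e_6\}-\{e_i,e_j\})\cup\{e_k',e_\ell'\}$ are $6$-element circuits of $M$; (iv) if $C$ is a circuit of $M$ with $|C|=6$ that is not described in (iii), then $C\in\{\{e_1,\dots,e_6\},\{e_1',\dots,e_6'\}\}$.
   Context: A matroid $M$ is a nest if $r(M)=r^*(M)=6$ and its ground set has a labelling $\{e_1,e_1',\dots,e_6,e_6'\}$ such that (1) the following sets are circuits: $\{e_1,e_2,e_3',e_4'\}$, $\{e_3,e_4,e_5',e_6'\}$, $\{e_5,e_6,e_1',e_2'\}$, $\{e_5,e_4,e_1',e_3'\}$, $\{e_1,e_3,e_2',e_6'\}$, $\{e_2,e_6,e_5',e_4'\}$, $\{e_2,e_3,e_5',e_1'\}$, $\{e_5,e_1,e_4',e_6'\}$, $\{e_4,e_6,e_2',e_3'\}$, $\{e_4,e_1,e_2',e_5'\}$, $\{e_2,e_5,e_3',e_6'\}$, $\{e_3,e_6,e_4',e_1'\}$, $\{e_3,e_5,e_4',e_2'\}$, $\{e_4,e_2,e_1',e_6'\}$, $\{e_1,e_6,e_3',e_5'\}$; and (2) the following sets are cocircuits: $\{e_3,e_4,e_1',e_2'\}$,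 $\{e_1,e_2,e_5',e_6'\}$, $\{e_5,e_6,e_3',e_4'\}$, $\{e_1,e_3,e_5',e_4'\}$, $\{e_5,e_4,e_2',e_6'\}$, $\{e_2,e_6,e_1',e_3'\}$, $\{e_5,e_1,e_2',e_3'\}$, $\{e_2,e_3,e_4',e_6'\}$, $\{e_4,e_6,e_5',e_1'\}$, $\{e_2,e_5,e_4',e_1'\}$, $\{e_4,e_1,e_3',e_6'\}$, $\{e_3,e_6,e_2',e_5'\}$, $\{e_4,e_2,e_3',e_5'\}$, $\{e_3,e_5,e_1',e_6'\}$, $\{e_1,e_6,e_4',e_2'\}$. $M$ has standard labelling if its ground set is literally $\{e_1,e_1',\dots,e_6,e_6'\}$ with this labelling being the identity. *)

theory Defs
  imports Main
begin

definition matroid :: "'a set \<Rightarrow> ('a set \<Rightarrow> bool) \<Rightarrow> bool" where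
  "matroid E indep \<longleftrightarrow> finite E \<and> indep {} \<and>
     (\<forall>I. indep I \<longrightarrow> I \<subseteq> E) \<and>
     (\<forall>I J. indep J \<and> I \<subseteq> J \<longrightarrow> indep I) \<and>
     (\<forall>I J. indep I \<and> indep J \<and> card I < card J \<longrightarrow> (\<exists>x\<in>J - I. indep (insert x I)))"

definition mrank :: "('a set \<Rightarrow> bool) \<Rightarrow> 'a set \<Rightarrow> nat" where
  "mrank indep X = Max {card I | I. I \<subseteq> X \<and> indep I}"

definition basis :: "'a set \<Rightarrow> ('a set \<Rightarrow> bool) \<Rightarrow> 'a set \<Rightarrow> bool" where
  "basis E indep B \<longleftrightarrow> B \<subseteq> E \<and> indep B \<and> (\<forall>x\<in>E - B. \<not> indep (insert x B))"

definition circuit :: "'a set \<Rightarrow> ('a set \<Rightarrow> bool) \<Rightarrow> 'a set \<Rightarrow> bool" where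
  "circuit E indep C \<longleftrightarrow> C \<subseteq> E \<and> \<not> indep C \<and> (\<forall>D. D \<subset> C \<longrightarrow> indep D)"

definition dual_indep :: "'a set \<Rightarrow> ('a set \<Rightarrow> bool) \<Rightarrow> 'a set \<Rightarrow> bool" where
  "dual_indep E indep I \<longleftrightarrow> I \<subseteq> E \<and> (\<exists>B. basis E indep B \<and> I \<inter> B = {})"

definition cocircuit :: "'a set \<Rightarrow> ('a set \<Rightarrow> bool) \<Rightarrow> 'a set \<Rightarrow> bool" where
  "cocircuit E indep C \<longleftrightarrow> circuit E (dual_indep E indep) C"

text \<open>E i stands for e_i, P i for e_i' (i = 1..6).\<close>
datatype elt = E nat | P nat

definition Es :: "elt set" where "Es = E ` {1..6}"
definition Ps :: "elt set" where "Ps = P ` {1..6}"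
definition ground :: "elt set" where "ground = Es \<union> Ps"

definition quad :: "nat \<Rightarrow> nat \<Rightarrow> nat \<Rightarrow> nat \<Rightarrow> elt set" where
  "quad i j k l = {E i, E j, P k, P l}"

definition nest_circuits :: "elt set set" where
  "nest_circuits = {quad 1 2 3 4, quad 3 4 5 6, quad 5 6 1 2, quad 5 4 1 3, quad 1 3 2 6,
     quad 2 6 5 4, quad 2 3 5 1, quad 5 1 4 6, quad 4 6 2 3, quad 4 1 2 5, quad 2 5 3 6,
     quad 3 6 4 1, quad 3 5 4 2, quad 4 2 1 6, quad 1 6 3 5}"

definition nest_cocircuits :: "elt set set" where
  "nest_cocircuits = {quad 3 4 1 2, quad 1 2 5 6, quad 5 6 3 4, quad 1 3 5 4, quad 5 4 2 6,
     quad 2 6 1 3, quad 5 1 2 3, quad 2 3 4 6, quad 4 6 5 1, quad 2 5 4 1, quad 4 1 3 6,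
     quad 3 6 2 5, quad 4 2 3 5, quad 3 5 1 6, quad 1 6 4 2}"

definition nest_std :: "(elt set \<Rightarrow> bool) \<Rightarrow> bool" where
  "nest_std indep \<longleftrightarrow> matroid ground indep \<and>
     mrank indep ground = 6 \<and> mrank (dual_indep ground indep) ground = 6 \<and>
     (\<forall>C\<in>nest_circuits. circuit ground indep C) \<and>
     (\<forall>C\<in>nest_cocircuits. cocircuit ground indep C)"

end

theory Submission imports Defs begin

definition T1 :: "nat \<Rightarrow> nat \<Rightarrow> nat \<Rightarrow> nat \<Rightarrow> elt set" where
  "T1 i j k l = {E i, E j} \<union> (Ps - {P k, P l})"
definition T2 :: "nat \<Rightarrow> nat \<Rightarrow> nat \<Rightarrow> nat \<Rightarrow> elt set" where
  "T2 i j k l = (Es - {E i, E j}) \<union> {P k, P l}"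
definition orth :: "elt set \<Rightarrow> bool" where
  "orth S \<longleftrightarrow> (\<forall>D\<in>nest_cocircuits. card (S \<inter> D) \<noteq> 1)"

lemma Es_eq: "Es = {E 1, E 2, E 3, E 4, E 5, E 6}"
  by (auto simp: Es_def)
lemma Ps_eq: "Ps = {P 1, P 2, P 3, P 4, P 5, P 6}"
  by (auto simp: Ps_def)
lemma ground_eq: "ground = {E 1, E 2, E 3, E 4, E 5, E 6, P 1, P 2, P 3, P 4, P 5, P 6}"
  by (auto simp: ground_def Es_eq Ps_eq)

lemma card1_4:
  assumes "distinct [a,b,c,d]"
  shows "card (S \<inter> {a,b,c,d}) = Suc 0 \<longleftrightarrow>
    (a \<in> S \<and> b \<notin> S \<and> c \<notin> S \<and> d \<notin> S) \<or> (a \<notin> S \<and> b \<in> S \<and> c \<notin> S \<and> d \<notin> S) \<or>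
    (a \<notin> S \<and> b \<notin> S \<and> c \<in> S \<and> d \<notin> S) \<or> (a \<notin> S \<and> b \<notin> S \<and> c \<notin> S \<and> d \<in> S)"
  using assms
  by (cases "a\<in>S"; cases "b\<in>S"; cases "c\<in>S"; cases "d\<in>S") (auto simp: Int_insert_right)

lemma sub_iff:
  assumes "S \<subseteq> ground"
  shows "S \<subseteq> A \<longleftrightarrow> (E 1 \<in> S \<longrightarrow> E 1 \<in> A) \<and> (E 2 \<in> S \<longrightarrow> E 2 \<in> A) \<and> (E 3 \<in> S \<longrightarrow> E 3 \<in> A)
     \<and> (E 4 \<in> S \<longrightarrow> E 4 \<in> A) \<and> (E 5 \<in> S \<longrightarrow> E 5 \<in> A) \<and> (E 6 \<in> S \<longrightarrow> E 6 \<in> A)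
     \<and> (P 1 \<in> S \<longrightarrow> P 1 \<in> A) \<and> (P 2 \<in> S \<longrightarrow> P 2 \<in> A) \<and> (P 3 \<in> S \<longrightarrow> P 3 \<in> A)
     \<and> (P 4 \<in> S \<longrightarrow> P 4 \<in> A) \<and> (P 5 \<in> S \<longrightarrow> P 5 \<in> A) \<and> (P 6 \<in> S \<longrightarrow> P 6 \<in> A)"
proof -
  have "S \<subseteq> A \<longleftrightarrow> (\<forall>x\<in>ground. x \<in> S \<longrightarrow> x \<in> A)" using assms by blast
  then show ?thesis unfolding ground_eq by (simp only: ball_simps simp_thms)
qed

lemma ne_iff:
  assumes "S \<subseteq> ground"
  shows "S \<noteq> {} \<longleftrightarrow> E 1 \<in> S \<or> E 2 \<in> S \<or> E 3 \<in> S \<or> E 4 \<in> S \<or> E 5 \<in> S \<or> E 6 \<in> S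
     \<or> P 1 \<in> S \<or> P 2 \<in> S \<or> P 3 \<in> S \<or> P 4 \<in> S \<or> P 5 \<in> S \<or> P 6 \<in> S"
proof -
  have "S \<noteq> {} \<longleftrightarrow> (\<exists>x\<in>ground. x \<in> S)" using assms by blast
  then show ?thesis unfolding ground_eq by (simp only: bex_simps simp_thms)
qed

lemma eq_iff: "S = A \<longleftrightarrow> S \<subseteq> A \<and> A \<subseteq> S" by blast
lemma psub_iff: "A \<subset> S \<longleftrightarrow> A \<subseteq> S \<and> \<not> S \<subseteq> A" by blast

lemma eq_iff12:
  assumes "S \<subseteq> ground"
  shows "S = A \<longleftrightarrow> (E 1 \<in> S \<longrightarrow> E 1 \<in> A) \<and> (E 2 \<in> S \<longrightarrow> E 2 \<in> A) \<and> (E 3 \<in> S \<longrightarrow> E 3 \<in> A)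
     \<and> (E 4 \<in> S \<longrightarrow> E 4 \<in> A) \<and> (E 5 \<in> S \<longrightarrow> E 5 \<in> A) \<and> (E 6 \<in> S \<longrightarrow> E 6 \<in> A)
     \<and> (P 1 \<in> S \<longrightarrow> P 1 \<in> A) \<and> (P 2 \<in> S \<longrightarrow> P 2 \<in> A) \<and> (P 3 \<in> S \<longrightarrow> P 3 \<in> A)
     \<and> (P 4 \<in> S \<longrightarrow> P 4 \<in> A) \<and> (P 5 \<in> S \<longrightarrow> P 5 \<in> A) \<and> (P 6 \<in> S \<longrightarrow> P 6 \<in> A) \<and> A \<subseteq> S"
  unfolding eq_iff[of S A] sub_iff[OF assms, of A] by (simp only: conj_assoc)

lemma orth_expand:
  "orth S \<longleftrightarrow> (\<forall>D\<in>nest_cocircuits. card (S \<inter> D) \<noteq> 1)" by (simp add: orth_def)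

definition one4 :: "bool \<Rightarrow> bool \<Rightarrow> bool \<Rightarrow> bool \<Rightarrow> bool" where
  "one4 a b c d \<longleftrightarrow> (a \<and> \<not>b \<and> \<not>c \<and> \<not>d) \<or> (\<not>a \<and> b \<and> \<not>c \<and> \<not>d) \<or> (\<not>a \<and> \<not>b \<and> c \<and> \<not>d) \<or> (\<not>a \<and> \<not>b \<and> \<not>c \<and> d)"

lemma orth_prop: "orth S \<longleftrightarrow>
    \<not> one4 (E 3 \<in> S) (E 4 \<in> S) (P 1 \<in> S) (P 2 \<in> S) \<and>
    \<not> one4 (E 1 \<in> S) (E 2 \<in> S) (P 5 \<in> S) (P 6 \<in> S) \<and>
    \<not> one4 (E 5 \<in> S) (E 6 \<in> S) (P 3 \<in> S) (P 4 \<in> S) \<and>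
    \<not> one4 (E 1 \<in> S) (E 3 \<in> S) (P 5 \<in> S) (P 4 \<in> S) \<and>
    \<not> one4 (E 5 \<in> S) (E 4 \<in> S) (P 2 \<in> S) (P 6 \<in> S) \<and>
    \<not> one4 (E 2 \<in> S) (E 6 \<in> S) (P 1 \<in> S) (P 3 \<in> S) \<and>
    \<not> one4 (E 5 \<in> S) (E 1 \<in> S) (P 2 \<in> S) (P 3 \<in> S) \<and>
    \<not> one4 (E 2 \<in> S) (E 3 \<in> S) (P 4 \<in> S) (P 6 \<in> S) \<and>
    \<not> one4 (E 4 \<in> S) (E 6 \<in> S) (P 5 \<in> S) (P 1 \<in> S) \<and>
    \<not> one4 (E 2 \<in> S) (E 5 \<in> S) (P 4 \<in> S) (P 1 \<in> S) \<and>
    \<not> one4 (E 4 \<in> S) (E 1 \<in> S) (P 3 \<in> S) (P 6 \<in> S) \<and>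
    \<not> one4 (E 3 \<in> S) (E 6 \<in> S) (P 2 \<in> S) (P 5 \<in> S) \<and>
    \<not> one4 (E 4 \<in> S) (E 2 \<in> S) (P 3 \<in> S) (P 5 \<in> S) \<and>
    \<not> one4 (E 3 \<in> S) (E 5 \<in> S) (P 1 \<in> S) (P 6 \<in> S) \<and>
    \<not> one4 (E 1 \<in> S) (E 6 \<in> S) (P 4 \<in> S) (P 2 \<in> S)"
  unfolding orth_def nest_cocircuits_def quad_def
  by (simp add: card1_4 one4_def)



section \<open>General matroid facts\<close>

lemma m_fin: "matroid G ind \<Longrightarrow> finite G" by (simp add: matroid_def)
lemma m_empty: "matroid G ind \<Longrightarrow> ind {}" by (simp add: matroid_def)
lemma m_sub: "matroid G ind \<Longrightarrow> ind I \<Longrightarrow> I \<subseteq> G" by (simp add: matroid_def)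
lemma m_mono: "matroid G ind \<Longrightarrow> ind J \<Longrightarrow> I \<subseteq> J \<Longrightarrow> ind I"
  unfolding matroid_def by blast
lemma m_aug: "matroid G ind \<Longrightarrow> ind I \<Longrightarrow> ind J \<Longrightarrow> card I < card J \<Longrightarrow> \<exists>x\<in>J - I. ind (insert x I)"
  unfolding matroid_def by blast

lemma rank_fin: "finite X \<Longrightarrow> finite {card I | I. I \<subseteq> X \<and> ind I}"
proof -
  assume "finite X"
  have "{card I | I. I \<subseteq> X \<and> ind I} \<subseteq> card ` Pow X" by blast
  then show ?thesis using \<open>finite X\<close> finite_subset by blast
qed

lemma rank_ge: "finite X \<Longrightarrow> ind I \<Longrightarrow> I \<subseteq> X \<Longrightarrow> card I \<le> mrank ind X"
  unfolding mrank_def by (rule Max_ge[OF rank_fin]) auto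

lemma rank_wit:
  assumes "matroid G ind" "finite X"
  shows "\<exists>I. I \<subseteq> X \<and> ind I \<and> card I = mrank ind X"
proof -
  have ne: "{card I | I. I \<subseteq> X \<and> ind I} \<noteq> {}" using m_empty[OF assms(1)] by blast
  have "mrank ind X \<in> {card I | I. I \<subseteq> X \<and> ind I}"
    unfolding mrank_def by (rule Max_in[OF rank_fin[OF assms(2)] ne])
  then show ?thesis by auto
qed

lemma m_extend:
  assumes M: "matroid G ind"
  shows "ind I \<Longrightarrow> ind J \<Longrightarrow> card I \<le> card J \<Longrightarrow> \<exists>K. ind K \<and> I \<subseteq> K \<and> K \<subseteq> I \<union> J \<and> card K = card J"
proof (induction "card J - card I" arbitrary: I)
  case 0
  then show ?case by (intro exI[of _ I]) auto
next
  case (Suc n)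
  then have lt: "card I < card J" by simp
  obtain x where x: "x \<in> J - I" "ind (insert x I)" using m_aug[OF M Suc.prems(1,2) lt] by blast
  have fI: "finite I" using m_sub[OF M Suc.prems(1)] m_fin[OF M] finite_subset by blast
  have ci: "card (insert x I) = Suc (card I)" using x fI by simp
  have "n = card J - card (insert x I)" using Suc.hyps(2) ci by simp
  moreover have "card (insert x I) \<le> card J" using ci lt by simp
  ultimately obtain K where K: "ind K" "insert x I \<subseteq> K" "K \<subseteq> insert x I \<union> J" "card K = card J"
    using Suc.hyps(1) x(2) Suc.prems(2) by blast
  have "K \<subseteq> I \<union> J" using K(3) x(1) by blast
  then show ?case using K by blast
qed

section \<open>Facts for nests\<close>

lemma ns_M: "nest_std ind \<Longrightarrow> matroid ground ind" by (simp add: nest_std_def)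
lemma ns_R: "nest_std ind \<Longrightarrow> mrank ind ground = 6" by (simp add: nest_std_def)
lemma ns_C: "nest_std ind \<Longrightarrow> C \<in> nest_circuits \<Longrightarrow> circuit ground ind C" by (simp add: nest_std_def)
lemma ns_D: "nest_std ind \<Longrightarrow> D \<in> nest_cocircuits \<Longrightarrow> cocircuit ground ind D" by (simp add: nest_std_def)

lemma fin_ground: "finite ground" by (simp add: ground_eq)

lemma ns_le6: "nest_std ind \<Longrightarrow> ind I \<Longrightarrow> card I \<le> 6"
  using rank_ge[OF fin_ground, of ind I] m_sub[OF ns_M] ns_R by metis

lemma ns_basis_card:
  assumes N: "nest_std ind" and B: "basis ground ind B"
  shows "card B = 6"
proof (rule ccontr)
  assume ne: "card B \<noteq> 6"
  have iB: "ind B" using B by (simp add: basis_def)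
  have "card B \<le> 6" using ns_le6[OF N iB] .
  with ne have lt: "card B < 6" by simp
  obtain I where I: "ind I" "card I = 6" using rank_wit[OF ns_M[OF N] fin_ground] ns_R[OF N] by metis
  obtain x where x: "x \<in> I - B" "ind (insert x B)" using m_aug[OF ns_M[OF N] iB I(1)] lt I(2) by auto
  have "x \<in> ground" using m_sub[OF ns_M[OF N] I(1)] x(1) by blast
  then show False using B x unfolding basis_def by blast
qed

lemma ns_card6_basis:
  assumes N: "nest_std ind" and I: "ind B" "card B = 6"
  shows "basis ground ind B"
  unfolding basis_def
proof (intro conjI ballI)
  show "B \<subseteq> ground" using m_sub[OF ns_M[OF N] I(1)] .
  show "ind B" by fact
  fix x assume x: "x \<in> ground - B"
  show "\<not> ind (insert x B)"
  proof
    assume h: "ind (insert x B)"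
    have fB: "finite B" using \<open>B \<subseteq> ground\<close> fin_ground finite_subset by blast
    have "card (insert x B) = 7" using x fB I(2) by simp
    then show False using ns_le6[OF N h] by simp
  qed
qed

lemma cocirc_meets:
  assumes D: "cocircuit ground ind D" and B: "basis ground ind B"
  shows "D \<inter> B \<noteq> {}"
  using D B unfolding cocircuit_def circuit_def dual_indep_def by blast

lemma circ_orth:
  assumes N: "nest_std ind" and C: "circuit ground ind C" and D: "cocircuit ground ind D"
    and e: "C \<inter> D = {e}"
  shows False
proof -
  have M: "matroid ground ind" using ns_M[OF N] .
  have eC: "e \<in> C" "e \<in> D" using e by auto
  have "D - {e} \<subset> D" using eC by blast
  then have "dual_indep ground ind (D - {e})" using D unfolding cocircuit_def circuit_def by blast
  then obtain B0 where B0: "basis ground ind B0" "(D - {e}) \<inter> B0 = {}" unfolding dual_indep_def by blast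
  have cB0: "card B0 = 6" using ns_basis_card[OF N B0(1)] .
  have iB0: "ind B0" using B0(1) by (simp add: basis_def)
  have "C - {e} \<subset> C" using eC by blast
  then have iC: "ind (C - {e})" using C unfolding circuit_def by blast
  have "card (C - {e}) \<le> card B0" using ns_le6[OF N iC] cB0 by simp
  then obtain K where K: "ind K" "C - {e} \<subseteq> K" "K \<subseteq> (C - {e}) \<union> B0" "card K = card B0"
    using m_extend[OF M iC iB0] by blast
  have bK: "basis ground ind K" using ns_card6_basis[OF N K(1)] K(4) cB0 by simp
  obtain x where x: "x \<in> D" "x \<in> K" using cocirc_meets[OF D bK] by blast
  have "x = e"
  proof (cases "x \<in> C - {e}")
    case True then show ?thesis using e x(1) by blast
  next
    case False then have "x \<in> B0" using K(3) x(2) by blast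
    then show ?thesis using B0(2) x(1) by blast
  qed
  then have "C \<subseteq> K" using K(2) x(2) by blast
  then have "ind C" using m_mono[OF M K(1)] by blast
  then show False using C unfolding circuit_def by blast
qed

lemma circ_orth2:
  assumes N: "nest_std ind" and C: "circuit ground ind C"
  shows "orth C"
  unfolding orth_def
proof
  fix D assume D: "D \<in> nest_cocircuits"
  show "card (C \<inter> D) \<noteq> 1"
  proof
    assume "card (C \<inter> D) = 1"
    then obtain e where "C \<inter> D = {e}" by (rule card_1_singletonE)
    then show False using circ_orth[OF N C ns_D[OF N D]] by blast
  qed
qed

lemma circ_ex:
  assumes M: "matroid ground ind"
  shows "D \<subseteq> ground \<Longrightarrow> \<not> ind D \<Longrightarrow> \<exists>C\<subseteq>D. circuit ground ind C"
proof (induction "card D" arbitrary: D rule: less_induct)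
  case less
  show ?case
  proof (cases "\<forall>D'. D' \<subset> D \<longrightarrow> ind D'")
    case True
    then have "circuit ground ind D" using less.prems unfolding circuit_def by blast
    then show ?thesis by blast
  next
    case False
    then obtain D' where D': "D' \<subset> D" "\<not> ind D'" by blast
    have fD: "finite D" using less.prems(1) fin_ground finite_subset by blast
    have "card D' < card D" using psubset_card_mono[OF fD D'(1)] .
    then obtain C where "C \<subseteq> D'" "circuit ground ind C"
      using less.hyps[of D'] D' less.prems(1) by blast
    then show ?thesis using D'(1) by blast
  qed
qed

lemma circ_ne: "nest_std ind \<Longrightarrow> circuit ground ind C \<Longrightarrow> C \<noteq> {}"
  using m_empty[OF ns_M] unfolding circuit_def by blast

lemma circ_sub: "circuit ground ind C \<Longrightarrow> C \<subseteq> ground"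
  unfolding circuit_def by blast

lemma circ6:
  assumes N: "nest_std ind" and T: "T \<subseteq> ground" "card T = 6"
    and D: "D \<in> nest_cocircuits" "D \<inter> T = {}"
    and PL: "\<And>S. S \<subseteq> ground \<Longrightarrow> orth S \<Longrightarrow> S \<noteq> {} \<Longrightarrow> S \<subseteq> T \<Longrightarrow> S = T"
  shows "circuit ground ind T"
  unfolding circuit_def
proof (intro conjI allI impI)
  show "T \<subseteq> ground" by fact
  show "\<not> ind T"
  proof
    assume "ind T"
    then have "basis ground ind T" using ns_card6_basis[OF N] T(2) by blast
    then show False using cocirc_meets[OF ns_D[OF N D(1)]] D(2) by blast
  qed
  fix D' assume D': "D' \<subset> T"
  show "ind D'"
  proof (rule ccontr)
    assume "\<not> ind D'"
    then obtain C where C: "C \<subseteq> D'" "circuit ground ind C"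
      using circ_ex[OF ns_M[OF N], of D'] D' T(1) by blast
    have "C = T" using PL[OF circ_sub[OF C(2)] circ_orth2[OF N C(2)] circ_ne[OF N C(2)]] C(1) D' by blast
    then show False using C(1) D' by blast
  qed
qed

lemma split_quad:
  assumes h: "{E i, E j, P k, P l} = {E a, E b, P c, P d}"
  shows "{E i, E j} = {E a, E b} \<and> {P k, P l} = {P c, P d}"
proof
  have "{E i, E j} = {E i, E j, P k, P l} \<inter> range E" by auto
  also have "\<dots> = {E a, E b, P c, P d} \<inter> range E" using h by simp
  also have "\<dots> = {E a, E b}" by auto
  finally show "{E i, E j} = {E a, E b}" .
  have "{P k, P l} = {E i, E j, P k, P l} \<inter> range P" by auto
  also have "\<dots> = {E a, E b, P c, P d} \<inter> range P" using h by simp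
  also have "\<dots> = {P c, P d}" by auto
  finally show "{P k, P l} = {P c, P d}" .
qed


definition L30 :: "elt set set" where
  "L30 = {T1 1 2 3 4, T2 1 2 3 4, T1 3 4 5 6, T2 3 4 5 6, T1 5 6 1 2, T2 5 6 1 2, T1 5 4 1 3, T2 5 4 1 3, T1 1 3 2 6, T2 1 3 2 6, T1 2 6 5 4, T2 2 6 5 4, T1 2 3 5 1, T2 2 3 5 1, T1 5 1 4 6, T2 5 1 4 6, T1 4 6 2 3, T2 4 6 2 3, T1 4 1 2 5, T2 4 1 2 5, T1 2 5 3 6, T2 2 5 3 6, T1 3 6 4 1, T2 3 6 4 1, T1 3 5 4 2, T2 3 5 4 2, T1 4 2 1 6, T2 4 2 1 6, T1 1 6 3 5, T2 1 6 3 5}"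

definition L30lit :: "elt set set" where
  "L30lit = {{E 1, E 2, P 1, P 2, P 5, P 6}, {E 3, E 4, E 5, E 6, P 3, P 4}, {E 3, E 4, P 1, P 2, P 3, P 4}, {E 1, E 2, E 5, E 6, P 5, P 6}, {E 5, E 6, P 3, P 4, P 5, P 6}, {E 1, E 2, E 3, E 4, P 1, P 2}, {E 4, E 5, P 2, P 4, P 5, P 6}, {E 1, E 2, E 3, E 6, P 1, P 3}, {E 1, E 3, P 1, P 3, P 4, P 5}, {E 2, E 4, E 5, E 6, P 2, P 6}, {E 2, E 6, P 1, P 2, P 3, P 6}, {E 1, E 3, E 4, E 5, P 4, P 5}, {E 2, E 3, P 2, P 3, P 4, P 6}, {E 1, E 4, E 5, E 6, P 1, P 5}, {E 1, E 5, P 1, P 2, P 3, P 5}, {E 2, E 3, E 4, E 6, P 4, P 6}, {E 4, E 6, P 1, P 4, P 5, P 6}, {E 1, E 2, E 3, E 5, P 2, P 3}, {E 1, E 4, P 1, P 3, P 4, P 6}, {E 2, E 3, E 5, E 6, P 2, P 5}, {E 2, E 5, P 1, P 2, P 4, P 5}, {E 1, E 3, E 4, E 6, P 3, P 6}, {E 3, E 6, P 2, P 3, P 5, P 6}, {E 1, E 2, E 4, E 5, P 1, P 4}, {E 3, E 5, P 1, P 3, P 5, P 6}, {E 1, E 2, E 4, E 6, P 2, P 4}, {E 2, E 4, P 2, P 3, P 4, P 5}, {E 1, E 3, E 5, E 6, P 1, P 6}, {E 1, E 6, P 1, P 2, P 4, P 6}, {E 2, E 3, E 4, E 5, P 3,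 P 5}}"

definition L47 :: "elt set set" where
  "L47 = nest_circuits \<union> L30lit \<union> {Es, Ps}"

lemma T_lit_0: "T1 1 2 3 4 = {E 1, E 2, P 1, P 2, P 5, P 6}"
  unfolding T1_def T2_def Es_eq Ps_eq by auto

lemma T_lit_1: "T2 1 2 3 4 = {E 3, E 4, E 5, E 6, P 3, P 4}"
  unfolding T1_def T2_def Es_eq Ps_eq by auto

lemma T_lit_2: "T1 3 4 5 6 = {E 3, E 4, P 1, P 2, P 3, P 4}"
  unfolding T1_def T2_def Es_eq Ps_eq by auto

lemma T_lit_3: "T2 3 4 5 6 = {E 1, E 2, E 5, E 6, P 5, P 6}"
  unfolding T1_def T2_def Es_eq Ps_eq by auto

lemma T_lit_4: "T1 5 6 1 2 = {E 5, E 6, P 3, P 4, P 5, P 6}"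
  unfolding T1_def T2_def Es_eq Ps_eq by auto

lemma T_lit_5: "T2 5 6 1 2 = {E 1, E 2, E 3, E 4, P 1, P 2}"
  unfolding T1_def T2_def Es_eq Ps_eq by auto

lemma T_lit_6: "T1 5 4 1 3 = {E 4, E 5, P 2, P 4, P 5, P 6}"
  unfolding T1_def T2_def Es_eq Ps_eq by auto

lemma T_lit_7: "T2 5 4 1 3 = {E 1, E 2, E 3, E 6, P 1, P 3}"
  unfolding T1_def T2_def Es_eq Ps_eq by auto

lemma T_lit_8: "T1 1 3 2 6 = {E 1, E 3, P 1, P 3, P 4, P 5}"
  unfolding T1_def T2_def Es_eq Ps_eq by auto

lemma T_lit_9: "T2 1 3 2 6 = {E 2, E 4, E 5, E 6, P 2, P 6}"
  unfolding T1_def T2_def Es_eq Ps_eq by auto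

lemma T_lit_10: "T1 2 6 5 4 = {E 2, E 6, P 1, P 2, P 3, P 6}"
  unfolding T1_def T2_def Es_eq Ps_eq by auto

lemma T_lit_11: "T2 2 6 5 4 = {E 1, E 3, E 4, E 5, P 4, P 5}"
  unfolding T1_def T2_def Es_eq Ps_eq by auto

lemma T_lit_12: "T1 2 3 5 1 = {E 2, E 3, P 2, P 3, P 4, P 6}"
  unfolding T1_def T2_def Es_eq Ps_eq by auto

lemma T_lit_13: "T2 2 3 5 1 = {E 1, E 4, E 5, E 6, P 1, P 5}"
  unfolding T1_def T2_def Es_eq Ps_eq by auto

lemma T_lit_14: "T1 5 1 4 6 = {E 1, E 5, P 1, P 2, P 3, P 5}"
  unfolding T1_def T2_def Es_eq Ps_eq by auto

lemma T_lit_15: "T2 5 1 4 6 = {E 2, E 3, E 4, E 6, P 4, P 6}"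
  unfolding T1_def T2_def Es_eq Ps_eq by auto

lemma T_lit_16: "T1 4 6 2 3 = {E 4, E 6, P 1, P 4, P 5, P 6}"
  unfolding T1_def T2_def Es_eq Ps_eq by auto

lemma T_lit_17: "T2 4 6 2 3 = {E 1, E 2, E 3, E 5, P 2, P 3}"
  unfolding T1_def T2_def Es_eq Ps_eq by auto

lemma T_lit_18: "T1 4 1 2 5 = {E 1, E 4, P 1, P 3, P 4, P 6}"
  unfolding T1_def T2_def Es_eq Ps_eq by auto

lemma T_lit_19: "T2 4 1 2 5 = {E 2, E 3, E 5, E 6, P 2, P 5}"
  unfolding T1_def T2_def Es_eq Ps_eq by auto

lemma T_lit_20: "T1 2 5 3 6 = {E 2, E 5, P 1, P 2, P 4, P 5}"
  unfolding T1_def T2_def Es_eq Ps_eq by auto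

lemma T_lit_21: "T2 2 5 3 6 = {E 1, E 3, E 4, E 6, P 3, P 6}"
  unfolding T1_def T2_def Es_eq Ps_eq by auto

lemma T_lit_22: "T1 3 6 4 1 = {E 3, E 6, P 2, P 3, P 5, P 6}"
  unfolding T1_def T2_def Es_eq Ps_eq by auto

lemma T_lit_23: "T2 3 6 4 1 = {E 1, E 2, E 4, E 5, P 1, P 4}"
  unfolding T1_def T2_def Es_eq Ps_eq by auto

lemma T_lit_24: "T1 3 5 4 2 = {E 3, E 5, P 1, P 3, P 5, P 6}"
  unfolding T1_def T2_def Es_eq Ps_eq by auto

lemma T_lit_25: "T2 3 5 4 2 = {E 1, E 2, E 4, E 6, P 2, P 4}"
  unfolding T1_def T2_def Es_eq Ps_eq by auto

lemma T_lit_26: "T1 4 2 1 6 = {E 2, E 4, P 2, P 3, P 4, P 5}"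
  unfolding T1_def T2_def Es_eq Ps_eq by auto

lemma T_lit_27: "T2 4 2 1 6 = {E 1, E 3, E 5, E 6, P 1, P 6}"
  unfolding T1_def T2_def Es_eq Ps_eq by auto

lemma T_lit_28: "T1 1 6 3 5 = {E 1, E 6, P 1, P 2, P 4, P 6}"
  unfolding T1_def T2_def Es_eq Ps_eq by auto

lemma T_lit_29: "T2 1 6 3 5 = {E 2, E 3, E 4, E 5, P 3, P 5}"
  unfolding T1_def T2_def Es_eq Ps_eq by auto

lemma L30_lit: "L30 = L30lit"
  unfolding L30_def L30lit_def T_lit_0 T_lit_1 T_lit_2 T_lit_3 T_lit_4 T_lit_5 T_lit_6 T_lit_7 T_lit_8 T_lit_9 T_lit_10 T_lit_11 T_lit_12 T_lit_13 T_lit_14 T_lit_15 T_lit_16 T_lit_17 T_lit_18 T_lit_19 T_lit_20 T_lit_21 T_lit_22 T_lit_23 T_lit_24 T_lit_25 T_lit_26 T_lit_27 T_lit_28 T_lit_29 ..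

lemma PL1_0:
  assumes g: "S \<subseteq> ground" and o: "orth S" and n: "S \<noteq> {}" and s: "S \<subseteq> {E 1, E 2, P 1, P 2, P 5, P 6}"
  shows "S = {E 1, E 2, P 1, P 2, P 5, P 6}"
proof (rule ccontr)
  assume c: "S \<noteq> {E 1, E 2, P 1, P 2, P 5, P 6}"
  note o' = o[unfolded orth_prop one4_def, simplified]
  note n' = n[unfolded ne_iff[OF g], simplified]
  note s' = s[unfolded sub_iff[OF g], simplified]
  note c' = c[unfolded eq_iff12[OF g], simplified]
  show False using o' n' s' c' by sat
qed

lemma T_circ_0:
  assumes N: "nest_std ind"
  shows "circuit ground ind {E 1, E 2, P 1, P 2, P 5, P 6}"
  apply (rule circ6[OF N, where D="quad 5 6 3 4"])
      apply (simp add: ground_eq)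
     apply simp
    apply (simp add: nest_cocircuits_def)
   apply (simp add: quad_def)
  apply (rule PL1_0; assumption)
  done

lemma PL1_1:
  assumes g: "S \<subseteq> ground" and o: "orth S" and n: "S \<noteq> {}" and s: "S \<subseteq> {E 3, E 4, E 5, E 6, P 3, P 4}"
  shows "S = {E 3, E 4, E 5, E 6, P 3, P 4}"
proof (rule ccontr)
  assume c: "S \<noteq> {E 3, E 4, E 5, E 6, P 3, P 4}"
  note o' = o[unfolded orth_prop one4_def, simplified]
  note n' = n[unfolded ne_iff[OF g], simplified]
  note s' = s[unfolded sub_iff[OF g], simplified]
  note c' = c[unfolded eq_iff12[OF g], simplified]
  show False using o' n' s' c' by sat
qed

lemma T_circ_1:
  assumes N: "nest_std ind"
  shows "circuit ground ind {E 3, E 4, E 5, E 6, P 3, P 4}"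
  apply (rule circ6[OF N, where D="quad 1 2 5 6"])
      apply (simp add: ground_eq)
     apply simp
    apply (simp add: nest_cocircuits_def)
   apply (simp add: quad_def)
  apply (rule PL1_1; assumption)
  done

lemma PL1_2:
  assumes g: "S \<subseteq> ground" and o: "orth S" and n: "S \<noteq> {}" and s: "S \<subseteq> {E 3, E 4, P 1, P 2, P 3, P 4}"
  shows "S = {E 3, E 4, P 1, P 2, P 3, P 4}"
proof (rule ccontr)
  assume c: "S \<noteq> {E 3, E 4, P 1, P 2, P 3, P 4}"
  note o' = o[unfolded orth_prop one4_def, simplified]
  note n' = n[unfolded ne_iff[OF g], simplified]
  note s' = s[unfolded sub_iff[OF g], simplified]
  note c' = c[unfolded eq_iff12[OF g], simplified]
  show False using o' n' s' c' by sat
qed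

lemma T_circ_2:
  assumes N: "nest_std ind"
  shows "circuit ground ind {E 3, E 4, P 1, P 2, P 3, P 4}"
  apply (rule circ6[OF N, where D="quad 1 2 5 6"])
      apply (simp add: ground_eq)
     apply simp
    apply (simp add: nest_cocircuits_def)
   apply (simp add: quad_def)
  apply (rule PL1_2; assumption)
  done

lemma PL1_3:
  assumes g: "S \<subseteq> ground" and o: "orth S" and n: "S \<noteq> {}" and s: "S \<subseteq> {E 1, E 2, E 5, E 6, P 5, P 6}"
  shows "S = {E 1, E 2, E 5, E 6, P 5, P 6}"
proof (rule ccontr)
  assume c: "S \<noteq> {E 1, E 2, E 5, E 6, P 5, P 6}"
  note o' = o[unfolded orth_prop one4_def, simplified]
  note n' = n[unfolded ne_iff[OF g], simplified]
  note s' = s[unfolded sub_iff[OF g], simplified]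
  note c' = c[unfolded eq_iff12[OF g], simplified]
  show False using o' n' s' c' by sat
qed

lemma T_circ_3:
  assumes N: "nest_std ind"
  shows "circuit ground ind {E 1, E 2, E 5, E 6, P 5, P 6}"
  apply (rule circ6[OF N, where D="quad 3 4 1 2"])
      apply (simp add: ground_eq)
     apply simp
    apply (simp add: nest_cocircuits_def)
   apply (simp add: quad_def)
  apply (rule PL1_3; assumption)
  done

lemma PL1_4:
  assumes g: "S \<subseteq> ground" and o: "orth S" and n: "S \<noteq> {}" and s: "S \<subseteq> {E 5, E 6, P 3, P 4, P 5, P 6}"
  shows "S = {E 5, E 6, P 3, P 4, P 5, P 6}"
proof (rule ccontr)
  assume c: "S \<noteq> {E 5, E 6, P 3, P 4, P 5, P 6}"
  note o' = o[unfolded orth_prop one4_def, simplified]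
  note n' = n[unfolded ne_iff[OF g], simplified]
  note s' = s[unfolded sub_iff[OF g], simplified]
  note c' = c[unfolded eq_iff12[OF g], simplified]
  show False using o' n' s' c' by sat
qed

lemma T_circ_4:
  assumes N: "nest_std ind"
  shows "circuit ground ind {E 5, E 6, P 3, P 4, P 5, P 6}"
  apply (rule circ6[OF N, where D="quad 3 4 1 2"])
      apply (simp add: ground_eq)
     apply simp
    apply (simp add: nest_cocircuits_def)
   apply (simp add: quad_def)
  apply (rule PL1_4; assumption)
  done

lemma PL1_5:
  assumes g: "S \<subseteq> ground" and o: "orth S" and n: "S \<noteq> {}" and s: "S \<subseteq> {E 1, E 2, E 3, E 4, P 1, P 2}"
  shows "S = {E 1, E 2, E 3, E 4, P 1, P 2}"
proof (rule ccontr)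
  assume c: "S \<noteq> {E 1, E 2, E 3, E 4, P 1, P 2}"
  note o' = o[unfolded orth_prop one4_def, simplified]
  note n' = n[unfolded ne_iff[OF g], simplified]
  note s' = s[unfolded sub_iff[OF g], simplified]
  note c' = c[unfolded eq_iff12[OF g], simplified]
  show False using o' n' s' c' by sat
qed

lemma T_circ_5:
  assumes N: "nest_std ind"
  shows "circuit ground ind {E 1, E 2, E 3, E 4, P 1, P 2}"
  apply (rule circ6[OF N, where D="quad 5 6 3 4"])
      apply (simp add: ground_eq)
     apply simp
    apply (simp add: nest_cocircuits_def)
   apply (simp add: quad_def)
  apply (rule PL1_5; assumption)
  done

lemma PL1_6:
  assumes g: "S \<subseteq> ground" and o: "orth S" and n: "S \<noteq> {}" and s: "S \<subseteq> {E 4, E 5, P 2, P 4, P 5, P 6}"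
  shows "S = {E 4, E 5, P 2, P 4, P 5, P 6}"
proof (rule ccontr)
  assume c: "S \<noteq> {E 4, E 5, P 2, P 4, P 5, P 6}"
  note o' = o[unfolded orth_prop one4_def, simplified]
  note n' = n[unfolded ne_iff[OF g], simplified]
  note s' = s[unfolded sub_iff[OF g], simplified]
  note c' = c[unfolded eq_iff12[OF g], simplified]
  show False using o' n' s' c' by sat
qed

lemma T_circ_6:
  assumes N: "nest_std ind"
  shows "circuit ground ind {E 4, E 5, P 2, P 4, P 5, P 6}"
  apply (rule circ6[OF N, where D="quad 2 6 1 3"])
      apply (simp add: ground_eq)
     apply simp
    apply (simp add: nest_cocircuits_def)
   apply (simp add: quad_def)
  apply (rule PL1_6; assumption)
  done

lemma PL1_7:
  assumes g: "S \<subseteq> ground" and o: "orth S" and n: "S \<noteq> {}" and s: "S \<subseteq> {E 1, E 2, E 3, E 6, P 1, P 3}"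
  shows "S = {E 1, E 2, E 3, E 6, P 1, P 3}"
proof (rule ccontr)
  assume c: "S \<noteq> {E 1, E 2, E 3, E 6, P 1, P 3}"
  note o' = o[unfolded orth_prop one4_def, simplified]
  note n' = n[unfolded ne_iff[OF g], simplified]
  note s' = s[unfolded sub_iff[OF g], simplified]
  note c' = c[unfolded eq_iff12[OF g], simplified]
  show False using o' n' s' c' by sat
qed

lemma T_circ_7:
  assumes N: "nest_std ind"
  shows "circuit ground ind {E 1, E 2, E 3, E 6, P 1, P 3}"
  apply (rule circ6[OF N, where D="quad 5 4 2 6"])
      apply (simp add: ground_eq)
     apply simp
    apply (simp add: nest_cocircuits_def)
   apply (simp add: quad_def)
  apply (rule PL1_7; assumption)
  done

lemma PL1_8:
  assumes g: "S \<subseteq> ground" and o: "orth S" and n: "S \<noteq> {}" and s: "S \<subseteq> {E 1, E 3, P 1, P 3, P 4, P 5}"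
  shows "S = {E 1, E 3, P 1, P 3, P 4, P 5}"
proof (rule ccontr)
  assume c: "S \<noteq> {E 1, E 3, P 1, P 3, P 4, P 5}"
  note o' = o[unfolded orth_prop one4_def, simplified]
  note n' = n[unfolded ne_iff[OF g], simplified]
  note s' = s[unfolded sub_iff[OF g], simplified]
  note c' = c[unfolded eq_iff12[OF g], simplified]
  show False using o' n' s' c' by sat
qed

lemma T_circ_8:
  assumes N: "nest_std ind"
  shows "circuit ground ind {E 1, E 3, P 1, P 3, P 4, P 5}"
  apply (rule circ6[OF N, where D="quad 5 4 2 6"])
      apply (simp add: ground_eq)
     apply simp
    apply (simp add: nest_cocircuits_def)
   apply (simp add: quad_def)
  apply (rule PL1_8; assumption)
  done

lemma PL1_9:
  assumes g: "S \<subseteq> ground" and o: "orth S" and n: "S \<noteq> {}" and s: "S \<subseteq> {E 2, E 4, E 5, E 6, P 2, P 6}"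
  shows "S = {E 2, E 4, E 5, E 6, P 2, P 6}"
proof (rule ccontr)
  assume c: "S \<noteq> {E 2, E 4, E 5, E 6, P 2, P 6}"
  note o' = o[unfolded orth_prop one4_def, simplified]
  note n' = n[unfolded ne_iff[OF g], simplified]
  note s' = s[unfolded sub_iff[OF g], simplified]
  note c' = c[unfolded eq_iff12[OF g], simplified]
  show False using o' n' s' c' by sat
qed

lemma T_circ_9:
  assumes N: "nest_std ind"
  shows "circuit ground ind {E 2, E 4, E 5, E 6, P 2, P 6}"
  apply (rule circ6[OF N, where D="quad 1 3 5 4"])
      apply (simp add: ground_eq)
     apply simp
    apply (simp add: nest_cocircuits_def)
   apply (simp add: quad_def)
  apply (rule PL1_9; assumption)
  done

lemma PL1_10:
  assumes g: "S \<subseteq> ground" and o: "orth S" and n: "S \<noteq> {}" and s: "S \<subseteq> {E 2, E 6, P 1, P 2, P 3, P 6}"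
  shows "S = {E 2, E 6, P 1, P 2, P 3, P 6}"
proof (rule ccontr)
  assume c: "S \<noteq> {E 2, E 6, P 1, P 2, P 3, P 6}"
  note o' = o[unfolded orth_prop one4_def, simplified]
  note n' = n[unfolded ne_iff[OF g], simplified]
  note s' = s[unfolded sub_iff[OF g], simplified]
  note c' = c[unfolded eq_iff12[OF g], simplified]
  show False using o' n' s' c' by sat
qed

lemma T_circ_10:
  assumes N: "nest_std ind"
  shows "circuit ground ind {E 2, E 6, P 1, P 2, P 3, P 6}"
  apply (rule circ6[OF N, where D="quad 1 3 5 4"])
      apply (simp add: ground_eq)
     apply simp
    apply (simp add: nest_cocircuits_def)
   apply (simp add: quad_def)
  apply (rule PL1_10; assumption)
  done

lemma PL1_11:
  assumes g: "S \<subseteq> ground" and o: "orth S" and n: "S \<noteq> {}" and s: "S \<subseteq> {E 1, E 3, E 4, E 5, P 4, P 5}"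
  shows "S = {E 1, E 3, E 4, E 5, P 4, P 5}"
proof (rule ccontr)
  assume c: "S \<noteq> {E 1, E 3, E 4, E 5, P 4, P 5}"
  note o' = o[unfolded orth_prop one4_def, simplified]
  note n' = n[unfolded ne_iff[OF g], simplified]
  note s' = s[unfolded sub_iff[OF g], simplified]
  note c' = c[unfolded eq_iff12[OF g], simplified]
  show False using o' n' s' c' by sat
qed

lemma T_circ_11:
  assumes N: "nest_std ind"
  shows "circuit ground ind {E 1, E 3, E 4, E 5, P 4, P 5}"
  apply (rule circ6[OF N, where D="quad 2 6 1 3"])
      apply (simp add: ground_eq)
     apply simp
    apply (simp add: nest_cocircuits_def)
   apply (simp add: quad_def)
  apply (rule PL1_11; assumption)
  done

lemma PL1_12:
  assumes g: "S \<subseteq> ground" and o: "orth S" and n: "S \<noteq> {}" and s: "S \<subseteq> {E 2, E 3, P 2, P 3, P 4, P 6}"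
  shows "S = {E 2, E 3, P 2, P 3, P 4, P 6}"
proof (rule ccontr)
  assume c: "S \<noteq> {E 2, E 3, P 2, P 3, P 4, P 6}"
  note o' = o[unfolded orth_prop one4_def, simplified]
  note n' = n[unfolded ne_iff[OF g], simplified]
  note s' = s[unfolded sub_iff[OF g], simplified]
  note c' = c[unfolded eq_iff12[OF g], simplified]
  show False using o' n' s' c' by sat
qed

lemma T_circ_12:
  assumes N: "nest_std ind"
  shows "circuit ground ind {E 2, E 3, P 2, P 3, P 4, P 6}"
  apply (rule circ6[OF N, where D="quad 4 6 5 1"])
      apply (simp add: ground_eq)
     apply simp
    apply (simp add: nest_cocircuits_def)
   apply (simp add: quad_def)
  apply (rule PL1_12; assumption)
  done

lemma PL1_13:
  assumes g: "S \<subseteq> ground" and o: "orth S" and n: "S \<noteq> {}" and s: "S \<subseteq> {E 1, E 4, E 5, E 6, P 1, P 5}"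
  shows "S = {E 1, E 4, E 5, E 6, P 1, P 5}"
proof (rule ccontr)
  assume c: "S \<noteq> {E 1, E 4, E 5, E 6, P 1, P 5}"
  note o' = o[unfolded orth_prop one4_def, simplified]
  note n' = n[unfolded ne_iff[OF g], simplified]
  note s' = s[unfolded sub_iff[OF g], simplified]
  note c' = c[unfolded eq_iff12[OF g], simplified]
  show False using o' n' s' c' by sat
qed

lemma T_circ_13:
  assumes N: "nest_std ind"
  shows "circuit ground ind {E 1, E 4, E 5, E 6, P 1, P 5}"
  apply (rule circ6[OF N, where D="quad 2 3 4 6"])
      apply (simp add: ground_eq)
     apply simp
    apply (simp add: nest_cocircuits_def)
   apply (simp add: quad_def)
  apply (rule PL1_13; assumption)
  done

lemma PL1_14:
  assumes g: "S \<subseteq> ground" and o: "orth S" and n: "S \<noteq> {}" and s: "S \<subseteq> {E 1, E 5, P 1, P 2, P 3, P 5}"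
  shows "S = {E 1, E 5, P 1, P 2, P 3, P 5}"
proof (rule ccontr)
  assume c: "S \<noteq> {E 1, E 5, P 1, P 2, P 3, P 5}"
  note o' = o[unfolded orth_prop one4_def, simplified]
  note n' = n[unfolded ne_iff[OF g], simplified]
  note s' = s[unfolded sub_iff[OF g], simplified]
  note c' = c[unfolded eq_iff12[OF g], simplified]
  show False using o' n' s' c' by sat
qed

lemma T_circ_14:
  assumes N: "nest_std ind"
  shows "circuit ground ind {E 1, E 5, P 1, P 2, P 3, P 5}"
  apply (rule circ6[OF N, where D="quad 2 3 4 6"])
      apply (simp add: ground_eq)
     apply simp
    apply (simp add: nest_cocircuits_def)
   apply (simp add: quad_def)
  apply (rule PL1_14; assumption)
  done

lemma PL1_15:
  assumes g: "S \<subseteq> ground" and o: "orth S" and n: "S \<noteq> {}" and s: "S \<subseteq> {E 2, E 3, E 4, E 6, P 4, P 6}"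
  shows "S = {E 2, E 3, E 4, E 6, P 4, P 6}"
proof (rule ccontr)
  assume c: "S \<noteq> {E 2, E 3, E 4, E 6, P 4, P 6}"
  note o' = o[unfolded orth_prop one4_def, simplified]
  note n' = n[unfolded ne_iff[OF g], simplified]
  note s' = s[unfolded sub_iff[OF g], simplified]
  note c' = c[unfolded eq_iff12[OF g], simplified]
  show False using o' n' s' c' by sat
qed

lemma T_circ_15:
  assumes N: "nest_std ind"
  shows "circuit ground ind {E 2, E 3, E 4, E 6, P 4, P 6}"
  apply (rule circ6[OF N, where D="quad 5 1 2 3"])
      apply (simp add: ground_eq)
     apply simp
    apply (simp add: nest_cocircuits_def)
   apply (simp add: quad_def)
  apply (rule PL1_15; assumption)
  done

lemma PL1_16:
  assumes g: "S \<subseteq> ground" and o: "orth S" and n: "S \<noteq> {}" and s: "S \<subseteq> {E 4, E 6, P 1, P 4, P 5, P 6}"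
  shows "S = {E 4, E 6, P 1, P 4, P 5, P 6}"
proof (rule ccontr)
  assume c: "S \<noteq> {E 4, E 6, P 1, P 4, P 5, P 6}"
  note o' = o[unfolded orth_prop one4_def, simplified]
  note n' = n[unfolded ne_iff[OF g], simplified]
  note s' = s[unfolded sub_iff[OF g], simplified]
  note c' = c[unfolded eq_iff12[OF g], simplified]
  show False using o' n' s' c' by sat
qed

lemma T_circ_16:
  assumes N: "nest_std ind"
  shows "circuit ground ind {E 4, E 6, P 1, P 4, P 5, P 6}"
  apply (rule circ6[OF N, where D="quad 5 1 2 3"])
      apply (simp add: ground_eq)
     apply simp
    apply (simp add: nest_cocircuits_def)
   apply (simp add: quad_def)
  apply (rule PL1_16; assumption)
  done

lemma PL1_17:
  assumes g: "S \<subseteq> ground" and o: "orth S" and n: "S \<noteq> {}" and s: "S \<subseteq> {E 1, E 2, E 3, E 5, P 2, P 3}"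
  shows "S = {E 1, E 2, E 3, E 5, P 2, P 3}"
proof (rule ccontr)
  assume c: "S \<noteq> {E 1, E 2, E 3, E 5, P 2, P 3}"
  note o' = o[unfolded orth_prop one4_def, simplified]
  note n' = n[unfolded ne_iff[OF g], simplified]
  note s' = s[unfolded sub_iff[OF g], simplified]
  note c' = c[unfolded eq_iff12[OF g], simplified]
  show False using o' n' s' c' by sat
qed

lemma T_circ_17:
  assumes N: "nest_std ind"
  shows "circuit ground ind {E 1, E 2, E 3, E 5, P 2, P 3}"
  apply (rule circ6[OF N, where D="quad 4 6 5 1"])
      apply (simp add: ground_eq)
     apply simp
    apply (simp add: nest_cocircuits_def)
   apply (simp add: quad_def)
  apply (rule PL1_17; assumption)
  done

lemma PL1_18:
  assumes g: "S \<subseteq> ground" and o: "orth S" and n: "S \<noteq> {}" and s: "S \<subseteq> {E 1, E 4, P 1, P 3, P 4, P 6}"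
  shows "S = {E 1, E 4, P 1, P 3, P 4, P 6}"
proof (rule ccontr)
  assume c: "S \<noteq> {E 1, E 4, P 1, P 3, P 4, P 6}"
  note o' = o[unfolded orth_prop one4_def, simplified]
  note n' = n[unfolded ne_iff[OF g], simplified]
  note s' = s[unfolded sub_iff[OF g], simplified]
  note c' = c[unfolded eq_iff12[OF g], simplified]
  show False using o' n' s' c' by sat
qed

lemma T_circ_18:
  assumes N: "nest_std ind"
  shows "circuit ground ind {E 1, E 4, P 1, P 3, P 4, P 6}"
  apply (rule circ6[OF N, where D="quad 3 6 2 5"])
      apply (simp add: ground_eq)
     apply simp
    apply (simp add: nest_cocircuits_def)
   apply (simp add: quad_def)
  apply (rule PL1_18; assumption)
  done

lemma PL1_19:
  assumes g: "S \<subseteq> ground" and o: "orth S" and n: "S \<noteq> {}" and s: "S \<subseteq> {E 2, E 3, E 5, E 6, P 2, P 5}"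
  shows "S = {E 2, E 3, E 5, E 6, P 2, P 5}"
proof (rule ccontr)
  assume c: "S \<noteq> {E 2, E 3, E 5, E 6, P 2, P 5}"
  note o' = o[unfolded orth_prop one4_def, simplified]
  note n' = n[unfolded ne_iff[OF g], simplified]
  note s' = s[unfolded sub_iff[OF g], simplified]
  note c' = c[unfolded eq_iff12[OF g], simplified]
  show False using o' n' s' c' by sat
qed

lemma T_circ_19:
  assumes N: "nest_std ind"
  shows "circuit ground ind {E 2, E 3, E 5, E 6, P 2, P 5}"
  apply (rule circ6[OF N, where D="quad 4 1 3 6"])
      apply (simp add: ground_eq)
     apply simp
    apply (simp add: nest_cocircuits_def)
   apply (simp add: quad_def)
  apply (rule PL1_19; assumption)
  done

lemma PL1_20:
  assumes g: "S \<subseteq> ground" and o: "orth S" and n: "S \<noteq> {}" and s: "S \<subseteq> {E 2, E 5, P 1, P 2, P 4, P 5}"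
  shows "S = {E 2, E 5, P 1, P 2, P 4, P 5}"
proof (rule ccontr)
  assume c: "S \<noteq> {E 2, E 5, P 1, P 2, P 4, P 5}"
  note o' = o[unfolded orth_prop one4_def, simplified]
  note n' = n[unfolded ne_iff[OF g], simplified]
  note s' = s[unfolded sub_iff[OF g], simplified]
  note c' = c[unfolded eq_iff12[OF g], simplified]
  show False using o' n' s' c' by sat
qed

lemma T_circ_20:
  assumes N: "nest_std ind"
  shows "circuit ground ind {E 2, E 5, P 1, P 2, P 4, P 5}"
  apply (rule circ6[OF N, where D="quad 4 1 3 6"])
      apply (simp add: ground_eq)
     apply simp
    apply (simp add: nest_cocircuits_def)
   apply (simp add: quad_def)
  apply (rule PL1_20; assumption)
  done

lemma PL1_21:
  assumes g: "S \<subseteq> ground" and o: "orth S" and n: "S \<noteq> {}" and s: "S \<subseteq> {E 1, E 3, E 4, E 6, P 3, P 6}"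
  shows "S = {E 1, E 3, E 4, E 6, P 3, P 6}"
proof (rule ccontr)
  assume c: "S \<noteq> {E 1, E 3, E 4, E 6, P 3, P 6}"
  note o' = o[unfolded orth_prop one4_def, simplified]
  note n' = n[unfolded ne_iff[OF g], simplified]
  note s' = s[unfolded sub_iff[OF g], simplified]
  note c' = c[unfolded eq_iff12[OF g], simplified]
  show False using o' n' s' c' by sat
qed

lemma T_circ_21:
  assumes N: "nest_std ind"
  shows "circuit ground ind {E 1, E 3, E 4, E 6, P 3, P 6}"
  apply (rule circ6[OF N, where D="quad 2 5 4 1"])
      apply (simp add: ground_eq)
     apply simp
    apply (simp add: nest_cocircuits_def)
   apply (simp add: quad_def)
  apply (rule PL1_21; assumption)
  done

lemma PL1_22:
  assumes g: "S \<subseteq> ground" and o: "orth S" and n: "S \<noteq> {}" and s: "S \<subseteq> {E 3, E 6, P 2, P 3, P 5, P 6}"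
  shows "S = {E 3, E 6, P 2, P 3, P 5, P 6}"
proof (rule ccontr)
  assume c: "S \<noteq> {E 3, E 6, P 2, P 3, P 5, P 6}"
  note o' = o[unfolded orth_prop one4_def, simplified]
  note n' = n[unfolded ne_iff[OF g], simplified]
  note s' = s[unfolded sub_iff[OF g], simplified]
  note c' = c[unfolded eq_iff12[OF g], simplified]
  show False using o' n' s' c' by sat
qed

lemma T_circ_22:
  assumes N: "nest_std ind"
  shows "circuit ground ind {E 3, E 6, P 2, P 3, P 5, P 6}"
  apply (rule circ6[OF N, where D="quad 2 5 4 1"])
      apply (simp add: ground_eq)
     apply simp
    apply (simp add: nest_cocircuits_def)
   apply (simp add: quad_def)
  apply (rule PL1_22; assumption)
  done

lemma PL1_23:
  assumes g: "S \<subseteq> ground" and o: "orth S" and n: "S \<noteq> {}" and s: "S \<subseteq> {E 1, E 2, E 4, E 5, P 1, P 4}"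
  shows "S = {E 1, E 2, E 4, E 5, P 1, P 4}"
proof (rule ccontr)
  assume c: "S \<noteq> {E 1, E 2, E 4, E 5, P 1, P 4}"
  note o' = o[unfolded orth_prop one4_def, simplified]
  note n' = n[unfolded ne_iff[OF g], simplified]
  note s' = s[unfolded sub_iff[OF g], simplified]
  note c' = c[unfolded eq_iff12[OF g], simplified]
  show False using o' n' s' c' by sat
qed

lemma T_circ_23:
  assumes N: "nest_std ind"
  shows "circuit ground ind {E 1, E 2, E 4, E 5, P 1, P 4}"
  apply (rule circ6[OF N, where D="quad 3 6 2 5"])
      apply (simp add: ground_eq)
     apply simp
    apply (simp add: nest_cocircuits_def)
   apply (simp add: quad_def)
  apply (rule PL1_23; assumption)
  done

lemma PL1_24:
  assumes g: "S \<subseteq> ground" and o: "orth S" and n: "S \<noteq> {}" and s: "S \<subseteq> {E 3, E 5, P 1, P 3, P 5, P 6}"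
  shows "S = {E 3, E 5, P 1, P 3, P 5, P 6}"
proof (rule ccontr)
  assume c: "S \<noteq> {E 3, E 5, P 1, P 3, P 5, P 6}"
  note o' = o[unfolded orth_prop one4_def, simplified]
  note n' = n[unfolded ne_iff[OF g], simplified]
  note s' = s[unfolded sub_iff[OF g], simplified]
  note c' = c[unfolded eq_iff12[OF g], simplified]
  show False using o' n' s' c' by sat
qed

lemma T_circ_24:
  assumes N: "nest_std ind"
  shows "circuit ground ind {E 3, E 5, P 1, P 3, P 5, P 6}"
  apply (rule circ6[OF N, where D="quad 1 6 4 2"])
      apply (simp add: ground_eq)
     apply simp
    apply (simp add: nest_cocircuits_def)
   apply (simp add: quad_def)
  apply (rule PL1_24; assumption)
  done

lemma PL1_25:
  assumes g: "S \<subseteq> ground" and o: "orth S" and n: "S \<noteq> {}" and s: "S \<subseteq> {E 1, E 2, E 4, E 6, P 2, P 4}"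
  shows "S = {E 1, E 2, E 4, E 6, P 2, P 4}"
proof (rule ccontr)
  assume c: "S \<noteq> {E 1, E 2, E 4, E 6, P 2, P 4}"
  note o' = o[unfolded orth_prop one4_def, simplified]
  note n' = n[unfolded ne_iff[OF g], simplified]
  note s' = s[unfolded sub_iff[OF g], simplified]
  note c' = c[unfolded eq_iff12[OF g], simplified]
  show False using o' n' s' c' by sat
qed

lemma T_circ_25:
  assumes N: "nest_std ind"
  shows "circuit ground ind {E 1, E 2, E 4, E 6, P 2, P 4}"
  apply (rule circ6[OF N, where D="quad 3 5 1 6"])
      apply (simp add: ground_eq)
     apply simp
    apply (simp add: nest_cocircuits_def)
   apply (simp add: quad_def)
  apply (rule PL1_25; assumption)
  done

lemma PL1_26:
  assumes g: "S \<subseteq> ground" and o: "orth S" and n: "S \<noteq> {}" and s: "S \<subseteq> {E 2, E 4, P 2, P 3, P 4, P 5}"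
  shows "S = {E 2, E 4, P 2, P 3, P 4, P 5}"
proof (rule ccontr)
  assume c: "S \<noteq> {E 2, E 4, P 2, P 3, P 4, P 5}"
  note o' = o[unfolded orth_prop one4_def, simplified]
  note n' = n[unfolded ne_iff[OF g], simplified]
  note s' = s[unfolded sub_iff[OF g], simplified]
  note c' = c[unfolded eq_iff12[OF g], simplified]
  show False using o' n' s' c' by sat
qed

lemma T_circ_26:
  assumes N: "nest_std ind"
  shows "circuit ground ind {E 2, E 4, P 2, P 3, P 4, P 5}"
  apply (rule circ6[OF N, where D="quad 3 5 1 6"])
      apply (simp add: ground_eq)
     apply simp
    apply (simp add: nest_cocircuits_def)
   apply (simp add: quad_def)
  apply (rule PL1_26; assumption)
  done

lemma PL1_27:
  assumes g: "S \<subseteq> ground" and o: "orth S" and n: "S \<noteq> {}" and s: "S \<subseteq> {E 1, E 3, E 5, E 6, P 1, P 6}"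
  shows "S = {E 1, E 3, E 5, E 6, P 1, P 6}"
proof (rule ccontr)
  assume c: "S \<noteq> {E 1, E 3, E 5, E 6, P 1, P 6}"
  note o' = o[unfolded orth_prop one4_def, simplified]
  note n' = n[unfolded ne_iff[OF g], simplified]
  note s' = s[unfolded sub_iff[OF g], simplified]
  note c' = c[unfolded eq_iff12[OF g], simplified]
  show False using o' n' s' c' by sat
qed

lemma T_circ_27:
  assumes N: "nest_std ind"
  shows "circuit ground ind {E 1, E 3, E 5, E 6, P 1, P 6}"
  apply (rule circ6[OF N, where D="quad 4 2 3 5"])
      apply (simp add: ground_eq)
     apply simp
    apply (simp add: nest_cocircuits_def)
   apply (simp add: quad_def)
  apply (rule PL1_27; assumption)
  done

lemma PL1_28:
  assumes g: "S \<subseteq> ground" and o: "orth S" and n: "S \<noteq> {}" and s: "S \<subseteq> {E 1, E 6, P 1, P 2, P 4, P 6}"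
  shows "S = {E 1, E 6, P 1, P 2, P 4, P 6}"
proof (rule ccontr)
  assume c: "S \<noteq> {E 1, E 6, P 1, P 2, P 4, P 6}"
  note o' = o[unfolded orth_prop one4_def, simplified]
  note n' = n[unfolded ne_iff[OF g], simplified]
  note s' = s[unfolded sub_iff[OF g], simplified]
  note c' = c[unfolded eq_iff12[OF g], simplified]
  show False using o' n' s' c' by sat
qed

lemma T_circ_28:
  assumes N: "nest_std ind"
  shows "circuit ground ind {E 1, E 6, P 1, P 2, P 4, P 6}"
  apply (rule circ6[OF N, where D="quad 4 2 3 5"])
      apply (simp add: ground_eq)
     apply simp
    apply (simp add: nest_cocircuits_def)
   apply (simp add: quad_def)
  apply (rule PL1_28; assumption)
  done

lemma PL1_29:
  assumes g: "S \<subseteq> ground" and o: "orth S" and n: "S \<noteq> {}" and s: "S \<subseteq> {E 2, E 3, E 4, E 5, P 3, P 5}"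
  shows "S = {E 2, E 3, E 4, E 5, P 3, P 5}"
proof (rule ccontr)
  assume c: "S \<noteq> {E 2, E 3, E 4, E 5, P 3, P 5}"
  note o' = o[unfolded orth_prop one4_def, simplified]
  note n' = n[unfolded ne_iff[OF g], simplified]
  note s' = s[unfolded sub_iff[OF g], simplified]
  note c' = c[unfolded eq_iff12[OF g], simplified]
  show False using o' n' s' c' by sat
qed

lemma T_circ_29:
  assumes N: "nest_std ind"
  shows "circuit ground ind {E 2, E 3, E 4, E 5, P 3, P 5}"
  apply (rule circ6[OF N, where D="quad 1 6 4 2"])
      apply (simp add: ground_eq)
     apply simp
    apply (simp add: nest_cocircuits_def)
   apply (simp add: quad_def)
  apply (rule PL1_29; assumption)
  done

lemma L30lit_circ:
  assumes N: "nest_std ind" and T: "T \<in> L30lit"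
  shows "circuit ground ind T"
  using T unfolding L30lit_def
  apply (simp only: insert_iff empty_iff)
  apply (elim disjE)
  apply (simp_all only: T_circ_0[OF N] T_circ_1[OF N] T_circ_2[OF N] T_circ_3[OF N] T_circ_4[OF N] T_circ_5[OF N] T_circ_6[OF N] T_circ_7[OF N] T_circ_8[OF N] T_circ_9[OF N] T_circ_10[OF N] T_circ_11[OF N] T_circ_12[OF N] T_circ_13[OF N] T_circ_14[OF N] T_circ_15[OF N] T_circ_16[OF N] T_circ_17[OF N] T_circ_18[OF N] T_circ_19[OF N] T_circ_20[OF N] T_circ_21[OF N] T_circ_22[OF N] T_circ_23[OF N] T_circ_24[OF N] T_circ_25[OF N] T_circ_26[OF N] T_circ_27[OF N] T_circ_28[OF N] T_circ_29[OF N])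
  done

lemma PL2:
  assumes g: "S \<subseteq> ground" and o: "orth S" and n: "S \<noteq> {}" and k: "\<forall>q\<in>L47. \<not> q \<subset> S"
  shows "S \<in> L47"
proof (rule ccontr)
  assume c: "S \<notin> L47"
  note o' = o[unfolded orth_prop one4_def, simplified]
  note n' = n[unfolded ne_iff[OF g], simplified]
  note c' = c[unfolded L47_def nest_circuits_def quad_def L30lit_def Es_eq Ps_eq Un_iff insert_iff empty_iff simp_thms, unfolded eq_iff12[OF g], simplified]
  note k' = k[unfolded L47_def nest_circuits_def quad_def L30lit_def Es_eq Ps_eq ball_Un ball_simps psub_iff, unfolded sub_iff[OF g], simplified]
  show False using o' n' c' k' by sat
qed

lemma quad_cases:
  assumes "quad i j k l \<in> nest_circuits"
  shows "\<exists>a b c d. {E i, E j} = {E a, E b} \<and> {P k, P l} = {P c, P d} \<and> T1 a b c d \<in> L30 \<and> T2 a b c d \<in> L30"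
proof -
  have "quad i j k l = quad 1 2 3 4 \<or> quad i j k l = quad 3 4 5 6 \<or> quad i j k l = quad 5 6 1 2 \<or> quad i j k l = quad 5 4 1 3 \<or> quad i j k l = quad 1 3 2 6 \<or> quad i j k l = quad 2 6 5 4 \<or> quad i j k l = quad 2 3 5 1 \<or> quad i j k l = quad 5 1 4 6 \<or> quad i j k l = quad 4 6 2 3 \<or> quad i j k l = quad 4 1 2 5 \<or> quad i j k l = quad 2 5 3 6 \<or> quad i j k l = quad 3 6 4 1 \<or> quad i j k l = quad 3 5 4 2 \<or> quad i j k l = quad 4 2 1 6 \<or> quad i j k l = quad 1 6 3 5"
    using assms unfolding nest_circuits_def by simp
  then show ?thesis
  proof (elim disjE)
    assume h: "quad i j k l = quad 1 2 3 4"
    show ?thesis using split_quad[OF h[unfolded quad_def]]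
      by (intro exI[of _ 1] exI[of _ 2] exI[of _ 3] exI[of _ 4]) (simp add: L30_def)
  next
    assume h: "quad i j k l = quad 3 4 5 6"
    show ?thesis using split_quad[OF h[unfolded quad_def]]
      by (intro exI[of _ 3] exI[of _ 4] exI[of _ 5] exI[of _ 6]) (simp add: L30_def)
  next
    assume h: "quad i j k l = quad 5 6 1 2"
    show ?thesis using split_quad[OF h[unfolded quad_def]]
      by (intro exI[of _ 5] exI[of _ 6] exI[of _ 1] exI[of _ 2]) (simp add: L30_def)
  next
    assume h: "quad i j k l = quad 5 4 1 3"
    show ?thesis using split_quad[OF h[unfolded quad_def]]
      by (intro exI[of _ 5] exI[of _ 4] exI[of _ 1] exI[of _ 3]) (simp add: L30_def)
  next
    assume h: "quad i j k l = quad 1 3 2 6"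
    show ?thesis using split_quad[OF h[unfolded quad_def]]
      by (intro exI[of _ 1] exI[of _ 3] exI[of _ 2] exI[of _ 6]) (simp add: L30_def)
  next
    assume h: "quad i j k l = quad 2 6 5 4"
    show ?thesis using split_quad[OF h[unfolded quad_def]]
      by (intro exI[of _ 2] exI[of _ 6] exI[of _ 5] exI[of _ 4]) (simp add: L30_def)
  next
    assume h: "quad i j k l = quad 2 3 5 1"
    show ?thesis using split_quad[OF h[unfolded quad_def]]
      by (intro exI[of _ 2] exI[of _ 3] exI[of _ 5] exI[of _ 1]) (simp add: L30_def)
  next
    assume h: "quad i j k l = quad 5 1 4 6"
    show ?thesis using split_quad[OF h[unfolded quad_def]]
      by (intro exI[of _ 5] exI[of _ 1] exI[of _ 4] exI[of _ 6]) (simp add: L30_def)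
  next
    assume h: "quad i j k l = quad 4 6 2 3"
    show ?thesis using split_quad[OF h[unfolded quad_def]]
      by (intro exI[of _ 4] exI[of _ 6] exI[of _ 2] exI[of _ 3]) (simp add: L30_def)
  next
    assume h: "quad i j k l = quad 4 1 2 5"
    show ?thesis using split_quad[OF h[unfolded quad_def]]
      by (intro exI[of _ 4] exI[of _ 1] exI[of _ 2] exI[of _ 5]) (simp add: L30_def)
  next
    assume h: "quad i j k l = quad 2 5 3 6"
    show ?thesis using split_quad[OF h[unfolded quad_def]]
      by (intro exI[of _ 2] exI[of _ 5] exI[of _ 3] exI[of _ 6]) (simp add: L30_def)
  next
    assume h: "quad i j k l = quad 3 6 4 1"
    show ?thesis using split_quad[OF h[unfolded quad_def]]
      by (intro exI[of _ 3] exI[of _ 6] exI[of _ 4] exI[of _ 1]) (simp add: L30_def)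
  next
    assume h: "quad i j k l = quad 3 5 4 2"
    show ?thesis using split_quad[OF h[unfolded quad_def]]
      by (intro exI[of _ 3] exI[of _ 5] exI[of _ 4] exI[of _ 2]) (simp add: L30_def)
  next
    assume h: "quad i j k l = quad 4 2 1 6"
    show ?thesis using split_quad[OF h[unfolded quad_def]]
      by (intro exI[of _ 4] exI[of _ 2] exI[of _ 1] exI[of _ 6]) (simp add: L30_def)
  next
    assume h: "quad i j k l = quad 1 6 3 5"
    show ?thesis using split_quad[OF h[unfolded quad_def]]
      by (intro exI[of _ 1] exI[of _ 6] exI[of _ 3] exI[of _ 5]) (simp add: L30_def)
  qed
qed

lemma L30_wit:
  assumes "T \<in> L30"
  shows "\<exists>a b c d. quad a b c d \<in> nest_circuits \<and> (T = T1 a b c d \<or> T = T2 a b c d)"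
proof -
  have "T = T1 1 2 3 4 \<or> T = T2 1 2 3 4 \<or> T = T1 3 4 5 6 \<or> T = T2 3 4 5 6 \<or> T = T1 5 6 1 2 \<or> T = T2 5 6 1 2 \<or> T = T1 5 4 1 3 \<or> T = T2 5 4 1 3 \<or> T = T1 1 3 2 6 \<or> T = T2 1 3 2 6 \<or> T = T1 2 6 5 4 \<or> T = T2 2 6 5 4 \<or> T = T1 2 3 5 1 \<or> T = T2 2 3 5 1 \<or> T = T1 5 1 4 6 \<or> T = T2 5 1 4 6 \<or> T = T1 4 6 2 3 \<or> T = T2 4 6 2 3 \<or> T = T1 4 1 2 5 \<or> T = T2 4 1 2 5 \<or> T = T1 2 5 3 6 \<or> T = T2 2 5 3 6 \<or> T = T1 3 6 4 1 \<or> T = T2 3 6 4 1 \<or> T = T1 3 5 4 2 \<or> T = T2 3 5 4 2 \<or> T = T1 4 2 1 6 \<or> T = T2 4 2 1 6 \<or> T = T1 1 6 3 5 \<or> T = T2 1 6 3 5"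
    using assms unfolding L30_def by simp
  then show ?thesis
  proof (elim disjE)
    assume h: "T = T1 1 2 3 4"
    show ?thesis using h
      by (intro exI[of _ 1] exI[of _ 2] exI[of _ 3] exI[of _ 4]) (simp add: nest_circuits_def)
  next
    assume h: "T = T2 1 2 3 4"
    show ?thesis using h
      by (intro exI[of _ 1] exI[of _ 2] exI[of _ 3] exI[of _ 4]) (simp add: nest_circuits_def)
  next
    assume h: "T = T1 3 4 5 6"
    show ?thesis using h
      by (intro exI[of _ 3] exI[of _ 4] exI[of _ 5] exI[of _ 6]) (simp add: nest_circuits_def)
  next
    assume h: "T = T2 3 4 5 6"
    show ?thesis using h
      by (intro exI[of _ 3] exI[of _ 4] exI[of _ 5] exI[of _ 6]) (simp add: nest_circuits_def)
  next
    assume h: "T = T1 5 6 1 2"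
    show ?thesis using h
      by (intro exI[of _ 5] exI[of _ 6] exI[of _ 1] exI[of _ 2]) (simp add: nest_circuits_def)
  next
    assume h: "T = T2 5 6 1 2"
    show ?thesis using h
      by (intro exI[of _ 5] exI[of _ 6] exI[of _ 1] exI[of _ 2]) (simp add: nest_circuits_def)
  next
    assume h: "T = T1 5 4 1 3"
    show ?thesis using h
      by (intro exI[of _ 5] exI[of _ 4] exI[of _ 1] exI[of _ 3]) (simp add: nest_circuits_def)
  next
    assume h: "T = T2 5 4 1 3"
    show ?thesis using h
      by (intro exI[of _ 5] exI[of _ 4] exI[of _ 1] exI[of _ 3]) (simp add: nest_circuits_def)
  next
    assume h: "T = T1 1 3 2 6"
    show ?thesis using h
      by (intro exI[of _ 1] exI[of _ 3] exI[of _ 2] exI[of _ 6]) (simp add: nest_circuits_def)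
  next
    assume h: "T = T2 1 3 2 6"
    show ?thesis using h
      by (intro exI[of _ 1] exI[of _ 3] exI[of _ 2] exI[of _ 6]) (simp add: nest_circuits_def)
  next
    assume h: "T = T1 2 6 5 4"
    show ?thesis using h
      by (intro exI[of _ 2] exI[of _ 6] exI[of _ 5] exI[of _ 4]) (simp add: nest_circuits_def)
  next
    assume h: "T = T2 2 6 5 4"
    show ?thesis using h
      by (intro exI[of _ 2] exI[of _ 6] exI[of _ 5] exI[of _ 4]) (simp add: nest_circuits_def)
  next
    assume h: "T = T1 2 3 5 1"
    show ?thesis using h
      by (intro exI[of _ 2] exI[of _ 3] exI[of _ 5] exI[of _ 1]) (simp add: nest_circuits_def)
  next
    assume h: "T = T2 2 3 5 1"
    show ?thesis using h
      by (intro exI[of _ 2] exI[of _ 3] exI[of _ 5] exI[of _ 1]) (simp add: nest_circuits_def)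
  next
    assume h: "T = T1 5 1 4 6"
    show ?thesis using h
      by (intro exI[of _ 5] exI[of _ 1] exI[of _ 4] exI[of _ 6]) (simp add: nest_circuits_def)
  next
    assume h: "T = T2 5 1 4 6"
    show ?thesis using h
      by (intro exI[of _ 5] exI[of _ 1] exI[of _ 4] exI[of _ 6]) (simp add: nest_circuits_def)
  next
    assume h: "T = T1 4 6 2 3"
    show ?thesis using h
      by (intro exI[of _ 4] exI[of _ 6] exI[of _ 2] exI[of _ 3]) (simp add: nest_circuits_def)
  next
    assume h: "T = T2 4 6 2 3"
    show ?thesis using h
      by (intro exI[of _ 4] exI[of _ 6] exI[of _ 2] exI[of _ 3]) (simp add: nest_circuits_def)
  next
    assume h: "T = T1 4 1 2 5"
    show ?thesis using h
      by (intro exI[of _ 4] exI[of _ 1] exI[of _ 2] exI[of _ 5]) (simp add: nest_circuits_def)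
  next
    assume h: "T = T2 4 1 2 5"
    show ?thesis using h
      by (intro exI[of _ 4] exI[of _ 1] exI[of _ 2] exI[of _ 5]) (simp add: nest_circuits_def)
  next
    assume h: "T = T1 2 5 3 6"
    show ?thesis using h
      by (intro exI[of _ 2] exI[of _ 5] exI[of _ 3] exI[of _ 6]) (simp add: nest_circuits_def)
  next
    assume h: "T = T2 2 5 3 6"
    show ?thesis using h
      by (intro exI[of _ 2] exI[of _ 5] exI[of _ 3] exI[of _ 6]) (simp add: nest_circuits_def)
  next
    assume h: "T = T1 3 6 4 1"
    show ?thesis using h
      by (intro exI[of _ 3] exI[of _ 6] exI[of _ 4] exI[of _ 1]) (simp add: nest_circuits_def)
  next
    assume h: "T = T2 3 6 4 1"
    show ?thesis using h
      by (intro exI[of _ 3] exI[of _ 6] exI[of _ 4] exI[of _ 1]) (simp add: nest_circuits_def)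
  next
    assume h: "T = T1 3 5 4 2"
    show ?thesis using h
      by (intro exI[of _ 3] exI[of _ 5] exI[of _ 4] exI[of _ 2]) (simp add: nest_circuits_def)
  next
    assume h: "T = T2 3 5 4 2"
    show ?thesis using h
      by (intro exI[of _ 3] exI[of _ 5] exI[of _ 4] exI[of _ 2]) (simp add: nest_circuits_def)
  next
    assume h: "T = T1 4 2 1 6"
    show ?thesis using h
      by (intro exI[of _ 4] exI[of _ 2] exI[of _ 1] exI[of _ 6]) (simp add: nest_circuits_def)
  next
    assume h: "T = T2 4 2 1 6"
    show ?thesis using h
      by (intro exI[of _ 4] exI[of _ 2] exI[of _ 1] exI[of _ 6]) (simp add: nest_circuits_def)
  next
    assume h: "T = T1 1 6 3 5"
    show ?thesis using h
      by (intro exI[of _ 1] exI[of _ 6] exI[of _ 3] exI[of _ 5]) (simp add: nest_circuits_def)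
  next
    assume h: "T = T2 1 6 3 5"
    show ?thesis using h
      by (intro exI[of _ 1] exI[of _ 6] exI[of _ 3] exI[of _ 5]) (simp add: nest_circuits_def)
  qed
qed


lemma card_nc: "q \<in> nest_circuits \<Longrightarrow> card q = 4"
  unfolding nest_circuits_def quad_def by auto
lemma card_L30: "q \<in> L30lit \<Longrightarrow> card q = 6"
  unfolding L30lit_def by auto
lemma card_Es: "card Es = 6" by (simp add: Es_eq)
lemma card_Ps: "card Ps = 6" by (simp add: Ps_eq)

lemma card_L47: "q \<in> L47 \<Longrightarrow> (q \<in> nest_circuits \<and> card q = 4) \<or> (q \<in> L30lit \<and> card q = 6) \<or> q = Es \<or> q = Ps"
  unfolding L47_def using card_nc card_L30 by blast

lemma noproper:
  assumes N: "nest_std ind" and C: "circuit ground ind C" "card C \<le> 6" and q: "q \<in> L47"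
  shows "\<not> q \<subset> C"
proof
  assume qC: "q \<subset> C"
  have fC: "finite C" using circ_sub[OF C(1)] fin_ground finite_subset by blast
  have iq: "ind q" using C(1) qC unfolding circuit_def by blast
  show False
  proof (cases "q \<in> nest_circuits \<or> q \<in> L30lit")
    case True
    then have "circuit ground ind q" using ns_C[OF N] L30lit_circ[OF N] by blast
    then show False using iq unfolding circuit_def by blast
  next
    case False
    then have "card q = 6" using q card_Es card_Ps unfolding L47_def by blast
    then show False using psubset_card_mono[OF fC qC] C(2) by simp
  qed
qed

lemma classify:
  assumes N: "nest_std ind" and C: "circuit ground ind C" "card C \<le> 6"
  shows "C \<in> L47"
  using PL2[OF circ_sub[OF C(1)] circ_orth2[OF N C(1)] circ_ne[OF N C(1)]] noproper[OF N C] by blast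

lemma circ_card_rank:
  assumes N: "nest_std ind" and C: "circuit ground ind C"
  shows "card C \<le> Suc (mrank ind C)"
proof -
  obtain e where e: "e \<in> C" using circ_ne[OF N C] by blast
  have fC: "finite C" using circ_sub[OF C] fin_ground finite_subset by blast
  have "C - {e} \<subset> C" using e by blast
  then have "ind (C - {e})" using C unfolding circuit_def by blast
  then have "card (C - {e}) \<le> mrank ind C" using rank_ge[OF fC] by blast
  moreover have "card C = Suc (card (C - {e}))" using card_Suc_Diff1[OF fC e] by simp
  ultimately show ?thesis by simp
qed

lemma card4_le: "card {a, b, c, d} \<le> (4::nat)"
proof -
  have "card (set [a, b, c, d]) \<le> length [a, b, c, d]" by (rule card_length)
  then show ?thesis by simp
qed

theorem lemma3p3:
  fixes indep :: "elt set \<Rightarrow> bool"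
  assumes "nest_std indep"
  shows "(\<forall>C. circuit ground indep C \<and> mrank indep C < mrank indep ground
              \<longrightarrow> card C \<in> {4, 6})
    \<and> (\<forall>C. circuit ground indep C \<and> card C = 4 \<longrightarrow> C \<in> nest_circuits)
    \<and> (\<forall>i j k l. circuit ground indep {E i, E j, P k, P l} \<longrightarrow>
          circuit ground indep ({E i, E j} \<union> (Ps - {P k, P l})) \<and>
          card ({E i, E j} \<union> (Ps - {P k, P l})) = 6 \<and>
          circuit ground indep ((Es - {E i, E j}) \<union> {P k, P l}) \<and>
          card ((Es - {E i, E j}) \<union> {P k, P l}) = 6)
    \<and> (\<forall>C. circuit ground indep C \<and> card C = 6 \<and>
          \<not> (\<exists>i j k l. circuit ground indep {E i, E j, P k, P l} \<and>
               (C = {E i, E j} \<union> (Ps - {P k, P l}) \<or> C = (Es - {E i, E j}) \<union> {P k, P l}))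
          \<longrightarrow> C \<in> {Es, Ps})"
proof (intro conjI allI impI)
  note N = assms
  fix C assume h: "circuit ground indep C \<and> mrank indep C < mrank indep ground"
  then have "card C \<le> 6" using circ_card_rank[OF N, of C] ns_R[OF N] by simp
  then have "C \<in> L47" using classify[OF N] h by blast
  then show "card C \<in> {4, 6}" using card_L47 card_Es card_Ps by fastforce
next
  note N = assms
  fix C assume h: "circuit ground indep C \<and> card C = 4"
  then have "C \<in> L47" using classify[OF N] by simp
  then show "C \<in> nest_circuits" using card_L47 card_Es card_Ps h by fastforce
next
  note N = assms
  fix i j k l assume h: "circuit ground indep {E i, E j, P k, P l}"
  have "card {E i, E j, P k, P l} \<le> 6" using card4_le[of "E i" "E j" "P k" "P l"] by simp
  then have "{E i, E j, P k, P l} \<in> L47" using classify[OF N h] by simp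
  then have "quad i j k l \<in> nest_circuits"
    using card_L47 card_Es card_Ps card4_le[of "E i" "E j" "P k" "P l"] unfolding quad_def by fastforce
  then obtain a b c d where abcd: "{E i, E j} = {E a, E b}" "{P k, P l} = {P c, P d}"
    "T1 a b c d \<in> L30" "T2 a b c d \<in> L30"
    using quad_cases[OF \<open>quad i j k l \<in> nest_circuits\<close>] by (elim exE conjE) (rule that; assumption)
  have e1: "{E i, E j} \<union> (Ps - {P k, P l}) = T1 a b c d" unfolding T1_def abcd by simp
  have e2: "(Es - {E i, E j}) \<union> {P k, P l} = T2 a b c d" unfolding T2_def abcd by simp
  show "circuit ground indep ({E i, E j} \<union> (Ps - {P k, P l}))"
    unfolding e1 using L30lit_circ[OF N] abcd(3) L30_lit by simp
  show "card ({E i, E j} \<union> (Ps - {P k, P l})) = 6"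
    unfolding e1 using card_L30 abcd(3) L30_lit by simp
  show "circuit ground indep ((Es - {E i, E j}) \<union> {P k, P l})"
    unfolding e2 using L30lit_circ[OF N] abcd(4) L30_lit by simp
  show "card ((Es - {E i, E j}) \<union> {P k, P l}) = 6"
    unfolding e2 using card_L30 abcd(4) L30_lit by simp
next
  note N = assms
  fix C assume h: "circuit ground indep C \<and> card C = 6 \<and>
          \<not> (\<exists>i j k l. circuit ground indep {E i, E j, P k, P l} \<and>
               (C = {E i, E j} \<union> (Ps - {P k, P l}) \<or> C = (Es - {E i, E j}) \<union> {P k, P l}))"
  then have "C \<in> L47" using classify[OF N] by simp
  then have cases: "C \<in> L30lit \<or> C = Es \<or> C = Ps" using card_L47 h by fastforce
  have "C \<notin> L30"
  proof
    assume "C \<in> L30"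
    then obtain a b c d where w: "quad a b c d \<in> nest_circuits" "C = T1 a b c d \<or> C = T2 a b c d"
      using L30_wit[OF \<open>C \<in> L30\<close>] by (elim exE conjE) (rule that; assumption)
    have cq: "circuit ground indep {E a, E b, P c, P d}" using ns_C[OF N w(1)] unfolding quad_def .
    have ex: "\<exists>i j k l. circuit ground indep {E i, E j, P k, P l} \<and>
               (C = {E i, E j} \<union> (Ps - {P k, P l}) \<or> C = (Es - {E i, E j}) \<union> {P k, P l})"
      using cq w(2) unfolding T1_def T2_def by (intro exI[of _ a] exI[of _ b] exI[of _ c] exI[of _ d]) simp
    have hn: "\<not> (\<exists>i j k l. circuit ground indep {E i, E j, P k, P l} \<and>
               (C = {E i, E j} \<union> (Ps - {P k, P l}) \<or> C = (Es - {E i, E j}) \<union> {P k, P l}))"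
      using h by (rule conjunct2[OF conjunct2])
    show False using hn ex by (rule notE)
  qed
  then show "C \<in> {Es, Ps}" using cases L30_lit by auto
qed

end
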